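(* Consider a semi-discrete split-form discontinuous Galerkin spectral element approximation of a hyperbolic conservation law on an element $E$ whose total discrete mathematical entropy $\mathcal{E}(t)$ satisfies $$\frac{d\mathcal{E}}{dt} + \int_{\partial E,N}\Big\{F_n^{\mathrm{ent}} + V^T\big(F^*_n - F_n\big)\Big\}\hat s\,dS \le 0,$$ where $\int_{\partial E,N}$ denotes Gauss–Lobatto quadrature (with positive weights) over the boundary, $\hat s>0$ is the scaling between physical and reference normals, $V$ is the vector of entropy variables, $F_n$ is the physical normal flux, $F^*_n$ is the numerical boundary flux, and $F_n^{\mathrm{ent}}$ is the normal entropy flux. Suppose that at each boundary quadrature node the entropy flux can be written as $F_n^{\mathrm{ent}} = U^T A U = W^T\Lambda W$ with $A = T\Lambda T^T$, $\Lambda$ real diagonal, $W = T^T U$ for some vector of variables $U$. Define $\Lambda^{\pm} = \tfrac12(\Lambda\pm|\Lambda|)$, let $I^-$ be the diagonal indicator matrix selecting the negative diagonal entries of $\Lambda$, $W^- = I^- T^T U$, and $\sqrt{|\Lambda^-|}$ the entrywise square root of $|\Lambda^-|$. If at the (inflow/outflow) boundary nodes, with external data specified as a vector $G$, the numerical boundary flux satisfies $$V^T\big(F^*_n - F_n\big) = U^T\Big(2\,T\,I^-\sqrt{|\Lambda^-|}\big(\sqrt{|\Lambda^-|}\,W^- - G\big)\Big),$$ then $$\frac{d\mathcal{E}}{dt} \le \int_{\partial E,N} G^T G\,\hat s\,dS,$$ i.e. the entropy rate is bounded solely by the boundary data.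
   Context: The mathematical entropy $S(q)$ is a strictly convex function of the conserved variables $q$, the entropy variables are $V = \partial S/\partial q$, and the entropy flux $f^{\mathrm{ent}}$ satisfies the compatibility condition $V^T f_q = f^{\mathrm{ent}}_q$. $|\Lambda|$ denotes the diagonal matrix of absolute values of the entries of $\Lambda$. The entropy inequality assumed in the claim is the one satisfied by split-form DGSEM with entropy conservative/stable interface fluxes, so that only physical boundary terms remain. *)

theory Defs
  imports "HOL-Analysis.Analysis"
begin

definition is_diag :: "real^'m^'m \<Rightarrow> bool" where
  "is_diag M \<longleftrightarrow> (\<forall>i j. i \<noteq> j \<longrightarrow> M$i$j = 0)"

definition mat_abs :: "real^'m^'m \<Rightarrow> real^'m^'m" where
  "mat_abs M = (\<chi> i j. \<bar>M$i$j\<bar>)"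

definition mat_sqrt :: "real^'m^'m \<Rightarrow> real^'m^'m" where
  "mat_sqrt M = (\<chi> i j. sqrt (M$i$j))"

definition lam_plus :: "real^'m^'m \<Rightarrow> real^'m^'m" where
  "lam_plus L = (1/2) *\<^sub>R (L + mat_abs L)"

definition lam_minus :: "real^'m^'m \<Rightarrow> real^'m^'m" where
  "lam_minus L = (1/2) *\<^sub>R (L - mat_abs L)"

definition ind_minus :: "real^'m^'m \<Rightarrow> real^'m^'m" where
  "ind_minus L = (\<chi> i j. if i = j \<and> L$i$i < 0 then 1 else 0)"

end

theory Submission
  imports Defs
begin

lemma diag_mv:
  fixes M :: "real^'m^'m"
  assumes "is_diag M"
  shows "(M *v x) $ i = M$i$i * x$i"
proof -
  have "(M *v x) $ i = (\<Sum>j\<in>UNIV. M$i$j * x$j)" by (simp add: matrix_vector_mult_def)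
  also have "\<dots> = M$i$i * x$i"
    using assms unfolding is_diag_def
    by (subst sum.remove[of UNIV i]) (auto intro!: sum.neutral)
  finally show ?thesis .
qed

lemma node:
  fixes U G :: "real^'m" and T L :: "real^'m^'m"
  assumes d: "is_diag L"
  shows "(transpose T *v U) \<bullet> (L *v (transpose T *v U)) +
     U \<bullet> (2 *\<^sub>R (T *v (ind_minus L *v
           (mat_sqrt (mat_abs (lam_minus L)) *v
             (mat_sqrt (mat_abs (lam_minus L)) *v
                 ((ind_minus L ** transpose T) *v U) - G))))) \<ge> - (G \<bullet> G)"
proof -
  define W where "W = transpose T *v U"
  define I where "I = ind_minus L"
  define S where "S = mat_sqrt (mat_abs (lam_minus L))"
  have dI: "is_diag I" unfolding I_def ind_minus_def is_diag_def by simp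
  have dS: "is_diag S" using d unfolding S_def is_diag_def mat_sqrt_def mat_abs_def lam_minus_def
    by simp
  have Ii: "I$i$i = (if L$i$i < 0 then 1 else 0)" for i unfolding I_def ind_minus_def by simp
  have Si: "S$i$i = sqrt (\<bar>(L$i$i - \<bar>L$i$i\<bar>)/2\<bar>)" for i
    unfolding S_def mat_sqrt_def mat_abs_def lam_minus_def by simp
  have e1: "U \<bullet> (2 *\<^sub>R (T *v y)) = 2 * (W \<bullet> y)" for y
    unfolding W_def by (simp add: dot_lmul_matrix[symmetric] transpose_matrix_vector inner_commute)
  have e2: "(I ** transpose T) *v U = I *v W"
    unfolding W_def by (simp only: matrix_vector_mul_assoc)
  have "W \<bullet> (L *v W) + 2 * (W \<bullet> (I *v (S *v (S *v (I *v W) - G))))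
     = (\<Sum>i\<in>UNIV. L$i$i * W$i * W$i + 2 * (W$i * (I$i$i * (S$i$i * (S$i$i * (I$i$i * W$i) - G$i)))))"
    by (simp add: inner_vec_def diag_mv[OF d] diag_mv[OF dI] diag_mv[OF dS] sum_distrib_left
        flip: sum.distrib) (simp add: algebra_simps)
  also have "\<dots> \<ge> (\<Sum>i\<in>UNIV. - (G$i * G$i))"
  proof (rule sum_mono)
    fix i
    show "- (G$i * G$i) \<le> L$i$i * W$i * W$i + 2 * (W$i * (I$i$i * (S$i$i * (S$i$i * (I$i$i * W$i) - G$i))))"
    proof (cases "L$i$i < 0")
      case True
      have ss: "S$i$i * S$i$i = - L$i$i" using True unfolding Si
        by (simp flip: power2_eq_square)
      have "0 \<le> (S$i$i * W$i - G$i)^2" by simp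
      then show ?thesis using True ss unfolding Ii by (simp add: power2_eq_square algebra_simps)
    next
      case False
      then have "0 \<le> L$i$i * (W$i * W$i)" by simp
      then have "0 \<le> L$i$i * W$i * W$i" by (simp add: mult.assoc)
      moreover have g: "0 \<le> G$i * G$i" by simp
      ultimately show ?thesis using False unfolding Ii by simp (use g in linarith)
    qed
  qed
  also have "(\<Sum>i\<in>UNIV. - (G$i * G$i)) = - (G \<bullet> G)"
    by (simp add: inner_vec_def sum_negf)
  finally show ?thesis
    unfolding W_def[symmetric] I_def[symmetric] S_def[symmetric] e2 e1 by linarith
qed

theorem theorem2:
  fixes Nd :: "'k set"
    and w s :: "'k \<Rightarrow> real"
    and E :: "real \<Rightarrow> real" and t dE :: real
    and U V Fstar Fn G :: "'k \<Rightarrow> real^'m"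
    and T Lam :: "'k \<Rightarrow> real^'m^'m"
    and Fent :: "'k \<Rightarrow> real"
  assumes fin: "finite Nd"
    and w_pos: "\<And>k. k \<in> Nd \<Longrightarrow> w k > 0"
    and s_pos: "\<And>k. k \<in> Nd \<Longrightarrow> s k > 0"
    and deriv: "(E has_real_derivative dE) (at t)"
    and entropy_ineq:
      "dE + (\<Sum>k\<in>Nd. w k * ((Fent k + V k \<bullet> (Fstar k - Fn k)) * s k)) \<le> 0"
    and diag: "\<And>k. k \<in> Nd \<Longrightarrow> is_diag (Lam k)"
    and Fent_A: "\<And>k. k \<in> Nd \<Longrightarrow>
        Fent k = U k \<bullet> ((T k ** Lam k ** transpose (T k)) *v U k)"
    and Fent_W: "\<And>k. k \<in> Nd \<Longrightarrow>
        Fent k = (transpose (T k) *v U k) \<bullet> (Lam k *v (transpose (T k) *v U k))"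
    and bc: "\<And>k. k \<in> Nd \<Longrightarrow>
        V k \<bullet> (Fstar k - Fn k) =
        U k \<bullet> (2 *\<^sub>R (T k *v (ind_minus (Lam k) *v
           (mat_sqrt (mat_abs (lam_minus (Lam k))) *v
             (mat_sqrt (mat_abs (lam_minus (Lam k))) *v
                 ((ind_minus (Lam k) ** transpose (T k)) *v U k) - G k)))))"
  shows "dE \<le> (\<Sum>k\<in>Nd. w k * ((G k \<bullet> G k) * s k))"
proof -
  have "(\<Sum>k\<in>Nd. - (w k * ((G k \<bullet> G k) * s k))) \<le> (\<Sum>k\<in>Nd. w k * ((Fent k + V k \<bullet> (Fstar k - Fn k)) * s k))"
  proof (rule sum_mono)
    fix k assume k: "k \<in> Nd"
    have h: "- (G k \<bullet> G k) \<le> Fent k + V k \<bullet> (Fstar k - Fn k)"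
      using node[OF diag[OF k], where T="T k" and U="U k" and G="G k"] Fent_W[OF k] bc[OF k] by simp
    have "0 \<le> w k * s k" using w_pos[OF k] s_pos[OF k] by simp
    from mult_left_mono[OF h this] show "- (w k * ((G k \<bullet> G k) * s k)) \<le> w k * ((Fent k + V k \<bullet> (Fstar k - Fn k)) * s k)"
      by (simp add: algebra_simps)
  qed
  then show ?thesis using entropy_ineq by (simp add: sum_negf)
qed

end
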